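(* For $g\geq1$, the level-2 principal congruence subgroup $\Gamma_2(g)$ is the normal closure in $\mathrm{GL}(g,\mathbb{Z})$ of $F_1$.
   Context: $\Gamma_2(g)$ is the kernel of the reduction homomorphism $\mathrm{GL}(g,\mathbb{Z})\to\mathrm{GL}(g,\mathbb{Z}/2\mathbb{Z})$. $F_1=I_g-2\mathcal{E}_{1,1}$ is the diagonal matrix $\mathrm{diag}(-1,1,\dots,1)$, where $\mathcal{E}_{1,1}$ has $(1,1)$-entry $1$ and all other entries $0$. *)

theory Defs
  imports "Jordan_Normal_Form.Matrix" "HOL-Algebra.Generated_Groups"
begin

definition GLZ :: "nat \<Rightarrow> int mat set" where
  "GLZ g = {A \<in> carrier_mat g g. invertible_mat A}"

definition GLZ_group :: "nat \<Rightarrow> int mat monoid" where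
  "GLZ_group g = \<lparr>carrier = GLZ g, mult = (\<lambda>A B. A * B), one = 1\<^sub>m g\<rparr>"

definition Gamma2 :: "nat \<Rightarrow> int mat set" where
  "Gamma2 g = {A \<in> GLZ g. \<forall>i<g. \<forall>j<g. A $$ (i,j) mod 2 = (1\<^sub>m g :: int mat) $$ (i,j) mod 2}"

text \<open>The elementary matrix E_{1,1} (index 0 in 0-based indexing) and F_1 = I - 2 E_{1,1}.\<close>
definition E11 :: "nat \<Rightarrow> int mat" where
  "E11 g = mat g g (\<lambda>(i,j). if i = 0 \<and> j = 0 then 1 else 0)"

definition F1 :: "nat \<Rightarrow> int mat" where
  "F1 g = 1\<^sub>m g - 2 \<cdot>\<^sub>m E11 g"

definition normal_closure :: "('a, 'b) monoid_scheme \<Rightarrow> 'a set \<Rightarrow> 'a set" where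
  "normal_closure G S = generate G {x \<otimes>\<^bsub>G\<^esub> s \<otimes>\<^bsub>G\<^esub> inv\<^bsub>G\<^esub> x | x s. x \<in> carrier G \<and> s \<in> S}"

end

theory Submission
  imports Defs "Jordan_Normal_Form.Gauss_Jordan_Elimination"
begin


lemma GLZ_iff: "A \<in> GLZ g \<longleftrightarrow> A \<in> carrier_mat g g \<and> (\<exists>B\<in>carrier_mat g g. A * B = 1\<^sub>m g \<and> B * A = 1\<^sub>m g)"
proof
  assume "A \<in> GLZ g"
  then obtain B where A: "A \<in> carrier_mat g g" and "A * B = 1\<^sub>m g" "B * A = 1\<^sub>m (dim_row B)"
    unfolding GLZ_def invertible_mat_def inverts_mat_def by auto
  moreover have "B \<in> carrier_mat g g"
    using calculation by (metis carrier_matD(1) carrier_matD(2) carrier_matI index_mult_mat(2,3) index_one_mat(2,3))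
  ultimately show "A \<in> carrier_mat g g \<and> (\<exists>B\<in>carrier_mat g g. A * B = 1\<^sub>m g \<and> B * A = 1\<^sub>m g)"
    by auto
next
  assume "A \<in> carrier_mat g g \<and> (\<exists>B\<in>carrier_mat g g. A * B = 1\<^sub>m g \<and> B * A = 1\<^sub>m g)"
  then show "A \<in> GLZ g" unfolding GLZ_def invertible_mat_def inverts_mat_def square_mat.simps
    by auto
qed

lemma GLZ_mult: assumes "A \<in> GLZ g" "B \<in> GLZ g" shows "A * B \<in> GLZ g"
proof -
  obtain A' where A: "A \<in> carrier_mat g g" "A' \<in> carrier_mat g g" "A * A' = 1\<^sub>m g" "A' * A = 1\<^sub>m g"
    using assms(1) GLZ_iff by blast
  obtain B' where B: "B \<in> carrier_mat g g" "B' \<in> carrier_mat g g" "B * B' = 1\<^sub>m g" "B' * B = 1\<^sub>m g"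
    using assms(2) GLZ_iff by blast
  have e1: "B * (B' * A') = A'"
    using A B by (metis assoc_mult_mat left_mult_one_mat)
  have 1: "(A * B) * (B' * A') = 1\<^sub>m g"
    using A B e1 by (metis assoc_mult_mat mult_carrier_mat)
  have e2: "A' * (A * B) = B"
    using A B by (metis assoc_mult_mat left_mult_one_mat)
  have 2: "(B' * A') * (A * B) = 1\<^sub>m g"
    using A B e2 by (metis assoc_mult_mat mult_carrier_mat)
  show ?thesis unfolding GLZ_iff using A B 1 2
    by (metis mult_carrier_mat)
qed

lemma one_GLZ: "1\<^sub>m g \<in> GLZ g"
  unfolding GLZ_iff by (intro conjI bexI[of _ "1\<^sub>m g"]) auto

lemma group_GLZ: "group (GLZ_group g)"
proof (rule groupI)
  show "\<And>x y. x \<in> carrier (GLZ_group g) \<Longrightarrow> y \<in> carrier (GLZ_group g) \<Longrightarrow> x \<otimes>\<^bsub>GLZ_group g\<^esub> y \<in> carrier (GLZ_group g)"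
    by (simp add: GLZ_group_def GLZ_mult)
  show "\<one>\<^bsub>GLZ_group g\<^esub> \<in> carrier (GLZ_group g)" by (simp add: GLZ_group_def one_GLZ)
  show "\<And>x y z. x \<in> carrier (GLZ_group g) \<Longrightarrow> y \<in> carrier (GLZ_group g) \<Longrightarrow> z \<in> carrier (GLZ_group g) \<Longrightarrow>
           x \<otimes>\<^bsub>GLZ_group g\<^esub> y \<otimes>\<^bsub>GLZ_group g\<^esub> z = x \<otimes>\<^bsub>GLZ_group g\<^esub> (y \<otimes>\<^bsub>GLZ_group g\<^esub> z)"
    by (simp add: GLZ_group_def GLZ_iff assoc_mult_mat[of _ g g _ g _ g])
  show "\<And>x. x \<in> carrier (GLZ_group g) \<Longrightarrow> \<one>\<^bsub>GLZ_group g\<^esub> \<otimes>\<^bsub>GLZ_group g\<^esub> x = x"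
    by (auto simp add: GLZ_group_def GLZ_iff)
  show "\<And>x. x \<in> carrier (GLZ_group g) \<Longrightarrow> \<exists>y\<in>carrier (GLZ_group g). y \<otimes>\<^bsub>GLZ_group g\<^esub> x = \<one>\<^bsub>GLZ_group g\<^esub>"
  proof -
    fix x assume "x \<in> carrier (GLZ_group g)"
    then obtain y where "x \<in> carrier_mat g g" "y \<in> carrier_mat g g" "x * y = 1\<^sub>m g" "y * x = 1\<^sub>m g"
      by (auto simp: GLZ_group_def GLZ_iff)
    then have "y \<in> GLZ g" unfolding GLZ_iff by blast
    then show "\<exists>y\<in>carrier (GLZ_group g). y \<otimes>\<^bsub>GLZ_group g\<^esub> x = \<one>\<^bsub>GLZ_group g\<^esub>"
      using \<open>y * x = 1\<^sub>m g\<close> by (auto simp: GLZ_group_def)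
  qed
qed

definition cong2 :: "nat \<Rightarrow> int mat \<Rightarrow> int mat \<Rightarrow> bool" where
  "cong2 g A B \<longleftrightarrow> (\<forall>i<g. \<forall>j<g. A $$ (i,j) mod 2 = B $$ (i,j) mod 2)"

lemma cong2_mult:
  assumes "A \<in> carrier_mat g g" "A' \<in> carrier_mat g g" "B \<in> carrier_mat g g" "B' \<in> carrier_mat g g"
    "cong2 g A A'" "cong2 g B B'"
  shows "cong2 g (A * B) (A' * B')"
  unfolding cong2_def
proof (intro allI impI)
  fix i j assume ij: "i < g" "j < g"
  have "(A * B) $$ (i,j) mod 2 = (\<Sum>l\<in>{0..<g}. A $$ (i,l) * B $$ (l,j)) mod 2"
    using assms ij by (simp add: scalar_prod_def)
  also have "\<dots> = (\<Sum>l\<in>{0..<g}. (A $$ (i,l) * B $$ (l,j)) mod 2) mod 2"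
    by (simp add: mod_sum_eq)
  also have "\<dots> = (\<Sum>l\<in>{0..<g}. (A' $$ (i,l) * B' $$ (l,j)) mod 2) mod 2"
  proof -
    have "\<And>l. l \<in> {0..<g} \<Longrightarrow> (A $$ (i,l) * B $$ (l,j)) mod 2 = (A' $$ (i,l) * B' $$ (l,j)) mod 2"
      using assms(5,6) ij unfolding cong2_def
      by (metis atLeastLessThan_iff mod_mult_eq)
    then show ?thesis by (metis (no_types, lifting) sum.cong)
  qed
  also have "\<dots> = (\<Sum>l\<in>{0..<g}. A' $$ (i,l) * B' $$ (l,j)) mod 2"
    by (simp add: mod_sum_eq)
  also have "\<dots> = (A' * B') $$ (i,j) mod 2"
    using assms ij by (simp add: scalar_prod_def)
  finally show "(A * B) $$ (i,j) mod 2 = (A' * B') $$ (i,j) mod 2" .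
qed

lemma cong2_refl: "cong2 g A A" by (simp add: cong2_def)
lemma cong2_sym: "cong2 g A B \<Longrightarrow> cong2 g B A" by (simp add: cong2_def)
lemma cong2_trans: "cong2 g A B \<Longrightarrow> cong2 g B C \<Longrightarrow> cong2 g A C" by (simp add: cong2_def)

lemma Gamma2_alt: "Gamma2 g = {A \<in> GLZ g. cong2 g A (1\<^sub>m g)}"
  unfolding Gamma2_def cong2_def by simp

lemma F1_multrow: "F1 g = multrow_mat g 0 (-1)"
  unfolding F1_def E11_def by (rule eq_matI) auto

lemma F1_cong2: "cong2 g (F1 g) (1\<^sub>m g)"
  unfolding F1_multrow cong2_def by auto

context
  fixes g :: nat
begin

interpretation G: group "GLZ_group g" by (rule group_GLZ)

lemma carrier_G: "carrier (GLZ_group g) = GLZ g" by (simp add: GLZ_group_def)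
lemma mult_G: "x \<otimes>\<^bsub>GLZ_group g\<^esub> y = x * y" by (simp add: GLZ_group_def)
lemma one_G: "\<one>\<^bsub>GLZ_group g\<^esub> = 1\<^sub>m g" by (simp add: GLZ_group_def)

lemma GLZ_carrier: "A \<in> GLZ g \<Longrightarrow> A \<in> carrier_mat g g" by (simp add: GLZ_iff)

lemma inv_G: assumes "A \<in> GLZ g"
  shows "inv\<^bsub>GLZ_group g\<^esub> A \<in> GLZ g" "A * inv\<^bsub>GLZ_group g\<^esub> A = 1\<^sub>m g"
    "inv\<^bsub>GLZ_group g\<^esub> A * A = 1\<^sub>m g"
  using G.inv_closed G.r_inv G.l_inv assms by (auto simp: carrier_G mult_G one_G)

lemma inv_G_eq: assumes "A \<in> GLZ g" "B \<in> GLZ g" "B * A = 1\<^sub>m g"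
  shows "inv\<^bsub>GLZ_group g\<^esub> A = B"
  using G.inv_equality assms by (auto simp: carrier_G mult_G one_G)

lemma Gamma2_subgroup: "subgroup (Gamma2 g) (GLZ_group g)"
proof (rule G.subgroupI)
  show "Gamma2 g \<subseteq> carrier (GLZ_group g)" by (auto simp: carrier_G Gamma2_alt)
  show "Gamma2 g \<noteq> {}" using one_GLZ[of g] cong2_refl[of g "1\<^sub>m g"] by (auto simp: Gamma2_alt)
  show "\<And>a. a \<in> Gamma2 g \<Longrightarrow> inv\<^bsub>GLZ_group g\<^esub> a \<in> Gamma2 g"
  proof -
    fix a assume a: "a \<in> Gamma2 g"
    let ?b = "inv\<^bsub>GLZ_group g\<^esub> a"
    have aG: "a \<in> GLZ g" and ac: "cong2 g a (1\<^sub>m g)" using a by (auto simp: Gamma2_alt)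
    have bG: "?b \<in> GLZ g" using inv_G aG by auto
    have "cong2 g (1\<^sub>m g * ?b) (a * ?b)"
      by (rule cong2_mult) (use aG bG GLZ_carrier ac cong2_sym cong2_refl in auto)
    moreover have "1\<^sub>m g * ?b = ?b" using bG GLZ_carrier left_mult_one_mat by blast
    ultimately have "cong2 g ?b (1\<^sub>m g)"
      using inv_G(2)[OF aG] by auto
    then show "?b \<in> Gamma2 g" using bG by (auto simp: Gamma2_alt)
  qed
  show "\<And>a b. a \<in> Gamma2 g \<Longrightarrow> b \<in> Gamma2 g \<Longrightarrow> a \<otimes>\<^bsub>GLZ_group g\<^esub> b \<in> Gamma2 g"
  proof -
    fix a b assume "a \<in> Gamma2 g" "b \<in> Gamma2 g"
    then have a: "a \<in> GLZ g" "cong2 g a (1\<^sub>m g)" and b: "b \<in> GLZ g" "cong2 g b (1\<^sub>m g)"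
      by (auto simp: Gamma2_alt)
    have "cong2 g (a * b) (1\<^sub>m g * 1\<^sub>m g)"
      by (rule cong2_mult) (use a b GLZ_carrier in auto)
    then show "a \<otimes>\<^bsub>GLZ_group g\<^esub> b \<in> Gamma2 g"
      using a b GLZ_mult by (auto simp: Gamma2_alt mult_G)
  qed
qed

lemma F1_GLZ: "F1 g \<in> GLZ g"
proof -
  have "F1 g * F1 g = 1\<^sub>m g"
    unfolding F1_multrow multrow_mat[OF multrow_mat_carrier, symmetric] by (rule eq_matI) auto
  then show ?thesis unfolding GLZ_iff by (auto simp: F1_multrow)
qed

lemma closure_sub_Gamma2: "normal_closure (GLZ_group g) {F1 g} \<subseteq> Gamma2 g"
  unfolding normal_closure_def
proof (rule G.generate_subgroup_incl[OF _ Gamma2_subgroup])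
  show "{x \<otimes>\<^bsub>GLZ_group g\<^esub> s \<otimes>\<^bsub>GLZ_group g\<^esub> inv\<^bsub>GLZ_group g\<^esub> x |x s. x \<in> carrier (GLZ_group g) \<and> s \<in> {F1 g}} \<subseteq> Gamma2 g"
  proof safe
    fix x assume x: "x \<in> carrier (GLZ_group g)"
    let ?y = "inv\<^bsub>GLZ_group g\<^esub> x"
    have xG: "x \<in> GLZ g" using x carrier_G by auto
    have yG: "?y \<in> GLZ g" using inv_G xG by auto
    have "cong2 g ((x * F1 g) * ?y) ((x * 1\<^sub>m g) * ?y)"
      by (intro cong2_mult) (use xG yG F1_GLZ GLZ_carrier F1_cong2 cong2_refl in \<open>auto intro!: mult_carrier_mat\<close>)
    moreover have "x * 1\<^sub>m g = x" using xG GLZ_carrier right_mult_one_mat by blast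
    ultimately have "cong2 g ((x * F1 g) * ?y) (1\<^sub>m g)"
      using inv_G(2)[OF xG] by auto
    moreover have "(x * F1 g) * ?y \<in> GLZ g" using xG yG F1_GLZ GLZ_mult by auto
    ultimately show "x \<otimes>\<^bsub>GLZ_group g\<^esub> F1 g \<otimes>\<^bsub>GLZ_group g\<^esub> ?y \<in> Gamma2 g"
      by (auto simp: Gamma2_alt mult_G)
  qed
qed

end


context fixes g :: nat
begin
interpretation G: group "GLZ_group g" by (rule group_GLZ)
lemma assoc4: "A \<in> carrier_mat n n \<Longrightarrow> B \<in> carrier_mat n n \<Longrightarrow> C \<in> carrier_mat n n \<Longrightarrow> D \<in> carrier_mat n n
  \<Longrightarrow> A * B * C * D = A * (B * (C * D))"
proof -
  assume c: "A \<in> carrier_mat n n" "B \<in> carrier_mat n n" "C \<in> carrier_mat n n" "D \<in> carrier_mat n n"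
  have "A * B * C * D = (A * B) * (C * D)"
    by (rule assoc_mult_mat[of "A * B" n n C n D n]) (use c in auto)
  also have "\<dots> = A * (B * (C * D))"
    by (rule assoc_mult_mat[of A n n B n "C * D" n]) (use c in auto)
  finally show ?thesis .
qed

abbreviation NC where "NC \<equiv> normal_closure (GLZ_group g) {F1 g}"

lemma conj_set_sub: "{x \<otimes>\<^bsub>GLZ_group g\<^esub> s \<otimes>\<^bsub>GLZ_group g\<^esub> inv\<^bsub>GLZ_group g\<^esub> x |x s. x \<in> carrier (GLZ_group g) \<and> s \<in> {F1 g}} \<subseteq> carrier (GLZ_group g)"
proof -
  have "F1 g \<in> carrier (GLZ_group g)" using F1_GLZ carrier_G by simp
  then show ?thesis by (auto intro!: G.m_closed G.inv_closed)
qed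

lemma NC_subgroup: "subgroup NC (GLZ_group g)"
  unfolding normal_closure_def by (rule G.generate_is_subgroup[OF conj_set_sub])

lemma NC_normal: "NC \<lhd> GLZ_group g"
  unfolding normal_closure_def
proof (rule G.normal_generateI[OF conj_set_sub])
  fix h and z :: "int mat" assume h: "h \<in> {x \<otimes>\<^bsub>GLZ_group g\<^esub> s \<otimes>\<^bsub>GLZ_group g\<^esub> inv\<^bsub>GLZ_group g\<^esub> x |x s. x \<in> carrier (GLZ_group g) \<and> s \<in> {F1 g}}"
    and y: "z \<in> carrier (GLZ_group g)"
  from h obtain x where x: "x \<in> carrier (GLZ_group g)" and hx: "h = x \<otimes>\<^bsub>GLZ_group g\<^esub> F1 g \<otimes>\<^bsub>GLZ_group g\<^esub> inv\<^bsub>GLZ_group g\<^esub> x"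
    by auto
  have F: "F1 g \<in> carrier (GLZ_group g)" using F1_GLZ by (simp add: carrier_G)
  have "z \<otimes>\<^bsub>GLZ_group g\<^esub> h \<otimes>\<^bsub>GLZ_group g\<^esub> inv\<^bsub>GLZ_group g\<^esub> z
      = (z \<otimes>\<^bsub>GLZ_group g\<^esub> x) \<otimes>\<^bsub>GLZ_group g\<^esub> F1 g \<otimes>\<^bsub>GLZ_group g\<^esub> inv\<^bsub>GLZ_group g\<^esub> (z \<otimes>\<^bsub>GLZ_group g\<^esub> x)"
    using x y F by (simp add: hx G.inv_mult_group G.m_assoc)
  then show "z \<otimes>\<^bsub>GLZ_group g\<^esub> h \<otimes>\<^bsub>GLZ_group g\<^esub> inv\<^bsub>GLZ_group g\<^esub> z \<in> {x \<otimes>\<^bsub>GLZ_group g\<^esub> s \<otimes>\<^bsub>GLZ_group g\<^esub> inv\<^bsub>GLZ_group g\<^esub> x |x s. x \<in> carrier (GLZ_group g) \<and> s \<in> {F1 g}}"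
    using x y by blast
qed

lemma NC_GLZ: "h \<in> NC \<Longrightarrow> h \<in> GLZ g"
  using subgroup.subset[OF NC_subgroup] carrier_G by auto

lemma NC_mult: "a \<in> NC \<Longrightarrow> b \<in> NC \<Longrightarrow> a * b \<in> NC"
  using subgroup.m_closed[OF NC_subgroup] mult_G by metis

lemma NC_conj: assumes "x \<in> GLZ g" "y \<in> GLZ g" "y * x = 1\<^sub>m g" "h \<in> NC"
  shows "x * h * y \<in> NC"
  using normal.inv_op_closed2[OF NC_normal, where x=x and h=h] assms inv_G_eq[where A=x and B=y]
  by (simp add: carrier_G mult_G)

lemma F1_NC: "F1 g \<in> NC"
proof -
  have "1\<^sub>m g \<otimes>\<^bsub>GLZ_group g\<^esub> F1 g \<otimes>\<^bsub>GLZ_group g\<^esub> inv\<^bsub>GLZ_group g\<^esub> (1\<^sub>m g) \<in> NC"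
    unfolding normal_closure_def by (rule generate.incl) (use one_GLZ carrier_G in auto)
  moreover have "inv\<^bsub>GLZ_group g\<^esub> (1\<^sub>m g) = 1\<^sub>m g" using G.inv_one one_G by metis
  moreover have "1\<^sub>m g * F1 g * 1\<^sub>m g = F1 g"
    using GLZ_carrier[OF F1_GLZ[of g]] by simp
  ultimately show ?thesis by (simp add: mult_G)
qed

lemma NC_cancel: assumes "M \<in> NC" "A \<in> GLZ g" "M * A \<in> NC" shows "A \<in> NC"
proof -
  have Mi: "inv\<^bsub>GLZ_group g\<^esub> M \<in> NC" using subgroup.m_inv_closed[OF NC_subgroup assms(1)] .
  have "inv\<^bsub>GLZ_group g\<^esub> M * (M * A) = A"
    using G.inv_solve_left[of A M "M * A"] assms NC_GLZ by (simp add: carrier_G mult_G GLZ_mult)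
  then show ?thesis using NC_mult[OF Mi assms(3)] by simp
qed

lemma NC_Gamma2: "M \<in> NC \<Longrightarrow> A \<in> Gamma2 g \<Longrightarrow> M * A \<in> Gamma2 g"
proof -
  assume "M \<in> NC" "A \<in> Gamma2 g"
  then have "M \<in> Gamma2 g" using closure_sub_Gamma2 by blast
  then show ?thesis using subgroup.m_closed[OF Gamma2_subgroup, of M g A] \<open>A \<in> Gamma2 g\<close> mult_G by metis
qed

lemma multrow_NC: assumes "k < g" shows "multrow_mat g k (-1) \<in> NC"
proof (cases "k = 0")
  case True then show ?thesis using F1_NC F1_multrow by simp
next
  case False
  let ?P = "swaprows_mat g 0 k :: int mat"
  have Pc: "?P \<in> carrier_mat g g" by simp
  have PP: "?P * ?P = 1\<^sub>m g"
  proof -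
    have "?P * ?P = swaprows 0 k ?P" using swaprows_mat[OF Pc, of 0 k] assms by simp
    also have "\<dots> = 1\<^sub>m g" using assms by (intro eq_matI) auto
    finally show ?thesis .
  qed
  have PG: "?P \<in> GLZ g" using PP unfolding GLZ_iff by auto
  have "?P * F1 g * ?P = ?P * (F1 g * ?P)"
    using Pc by (simp add: F1_multrow assoc_mult_mat[of _ g g _ g _ g])
  also have "\<dots> = multrow_mat g k (-1)"
  proof -
    have "F1 g * ?P = multrow 0 (-1) ?P" using multrow_mat[OF Pc] F1_multrow by simp
    then have "?P * (F1 g * ?P) = swaprows 0 k (multrow 0 (-1) ?P)"
      using swaprows_mat[OF multrow_carrier[THEN iffD2, OF Pc], of 0 k] assms by simp
    also have "\<dots> = multrow_mat g k (-1)" using assms False by (intro eq_matI) auto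
    finally show ?thesis .
  qed
  finally show ?thesis using NC_conj[OF PG PG PP F1_NC] by simp
qed

lemma addrow_NC: assumes "i < g" "j < g" "i \<noteq> j" shows "addrow_mat g (2 * a) i j \<in> NC"
proof -
  let ?T = "addrow_mat g a i j :: int mat" and ?T' = "addrow_mat g (-a) i j :: int mat"
  let ?F = "multrow_mat g j (-1) :: int mat"
  have TT: "?T' * ?T = 1\<^sub>m g"
    unfolding addrow_mat[OF addrow_mat_carrier assms(2), symmetric] using assms
    by (intro eq_matI) auto
  have TT': "?T * ?T' = 1\<^sub>m g"
    unfolding addrow_mat[OF addrow_mat_carrier assms(2), symmetric] using assms
    by (intro eq_matI) auto
  have TG: "?T \<in> GLZ g" "?T' \<in> GLZ g" using TT TT' unfolding GLZ_iff by auto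
  have FN: "?F \<in> NC" using multrow_NC assms by simp
  have "?T * ?F * ?T' * ?F = ?T * (?F * (?T' * ?F))"
    by (rule assoc4) auto
  also have "\<dots> = addrow_mat g (2 * a) i j"
  proof -
    have Fc: "?F \<in> carrier_mat g g" by simp
    have 1: "?T' * ?F = addrow (-a) i j ?F" using addrow_mat[OF Fc assms(2)] by simp
    have c1: "addrow (-a) i j ?F \<in> carrier_mat g g" by simp
    have 2: "?F * addrow (-a) i j ?F = multrow j (-1) (addrow (-a) i j ?F)"
      using multrow_mat[OF c1] by simp
    have c2: "multrow j (-1) (addrow (-a) i j ?F) \<in> carrier_mat g g" by simp
    have 3: "?T * multrow j (-1) (addrow (-a) i j ?F) = addrow a i j (multrow j (-1) (addrow (-a) i j ?F))"
      using addrow_mat[OF c2 assms(2)] by simp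
    have "addrow a i j (multrow j (-1) (addrow (-a) i j ?F)) = addrow_mat g (2 * a) i j"
      using assms by (intro eq_matI) auto
    then show ?thesis using 1 2 3 by simp
  qed
  finally show ?thesis using NC_mult[OF NC_conj[OF TG TT FN] FN] by simp
qed

end



lemma sum_decr:
  fixes f f' :: "'a \<Rightarrow> nat"
  assumes "finite S" "p \<in> S" "\<And>x. x \<in> S \<Longrightarrow> x \<noteq> p \<Longrightarrow> f' x = f x" "f' p < f p"
  shows "sum f' S < sum f S"
proof -
  have "sum f' S = f' p + sum f' (S - {p})" using assms by (simp add: sum.remove)
  also have "sum f' (S - {p}) = sum f (S - {p})" using assms(3) by (intro sum.cong) auto
  also have "f' p + sum f (S - {p}) < f p + sum f (S - {p})" using assms(4) by simp
  also have "\<dots> = sum f S" using assms by (simp add: sum.remove)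
  finally show ?thesis .
qed

lemma arith1: "(x::int) mod 2 = 0 \<Longrightarrow> x \<noteq> 0 \<Longrightarrow> nat \<bar>2 * (if x > 0 then -1 else 1) + x\<bar> < nat \<bar>x\<bar>"
proof -
  assume "x mod 2 = 0" "x \<noteq> 0"
  then have "x \<ge> 2 \<or> x \<le> -2" by presburger
  then show ?thesis by auto
qed

lemma arith2: "0 < \<bar>y::int\<bar> \<Longrightarrow> \<bar>y\<bar> < \<bar>x\<bar> \<Longrightarrow> nat \<bar>2 * (if (x > 0) = (y > 0) then -1 else 1) * y + x\<bar> < nat \<bar>x\<bar>"
  by (cases "x > 0"; cases "y > 0") auto

context fixes g :: nat
begin

definition idcols :: "nat \<Rightarrow> int mat \<Rightarrow> bool" where
  "idcols k A \<longleftrightarrow> (\<forall>i<g. \<forall>c<k. A $$ (i,c) = (if i = c then 1 else 0))"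

definition below :: "nat \<Rightarrow> int mat \<Rightarrow> bool" where
  "below k A \<longleftrightarrow> (\<forall>i. k < i \<and> i < g \<longrightarrow> A $$ (i,k) = 0)"

lemma Gamma2_carrier: "A \<in> Gamma2 g \<Longrightarrow> A \<in> carrier_mat g g"
  by (auto simp: Gamma2_def GLZ_iff)

lemma Gamma2_GLZ: "A \<in> Gamma2 g \<Longrightarrow> A \<in> GLZ g"
  by (auto simp: Gamma2_def)

lemma Gamma2_mod: "A \<in> Gamma2 g \<Longrightarrow> i < g \<Longrightarrow> j < g \<Longrightarrow> A $$ (i,j) mod 2 = (if i = j then 1 else 0)"
  by (auto simp: Gamma2_def)

lemma unit_pivot:
  assumes A: "A \<in> GLZ g" and k: "k < g" and ic: "idcols k A" and bl: "below k A"
  shows "A $$ (k,k) = 1 \<or> A $$ (k,k) = -1"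
proof -
  obtain B where Ac: "A \<in> carrier_mat g g" and Bc: "B \<in> carrier_mat g g" and BA: "B * A = 1\<^sub>m g"
    using A unfolding GLZ_iff by blast
  have prod: "\<And>c. c < g \<Longrightarrow> (B * A) $$ (k,c) = (\<Sum>l\<in>{0..<g}. B $$ (k,l) * A $$ (l,c))"
    using Ac Bc k by (simp add: scalar_prod_def)
  have Bz: "B $$ (k,c) = 0" if c: "c < k" for c
  proof -
    have cg: "c < g" using c k by simp
    have "(\<Sum>l\<in>{0..<g}. B $$ (k,l) * A $$ (l,c)) = (\<Sum>l\<in>{0..<g}. if l = c then B $$ (k,l) else 0)"
      using ic c unfolding idcols_def by (intro sum.cong) auto
    also have "\<dots> = B $$ (k,c)" using cg by simp
    finally have "(B * A) $$ (k,c) = B $$ (k,c)" using prod[OF cg] by simp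
    then show ?thesis using BA k cg c by simp
  qed
  have "(\<Sum>l\<in>{0..<g}. B $$ (k,l) * A $$ (l,k)) = (\<Sum>l\<in>{0..<g}. if l = k then B $$ (k,l) * A $$ (l,k) else 0)"
  proof (intro sum.cong refl)
    fix l assume l: "l \<in> {0..<g}"
    show "B $$ (k,l) * A $$ (l,k) = (if l = k then B $$ (k,l) * A $$ (l,k) else 0)"
      using Bz[of l] bl l unfolding below_def by (cases "l < k"; cases "l = k") auto
  qed
  also have "\<dots> = B $$ (k,k) * A $$ (k,k)" using k by simp
  finally have "B $$ (k,k) * A $$ (k,k) = 1" using prod[OF k] BA k by simp
  then show ?thesis using zmult_eq_1_iff by blast
qed

lemma L1:
  assumes H: "\<And>B. B \<in> Gamma2 g \<Longrightarrow> idcols (Suc k) B \<Longrightarrow> B \<in> NC g" and k: "k < g"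
  shows "A \<in> Gamma2 g \<Longrightarrow> idcols k A \<Longrightarrow> below k A \<Longrightarrow> A $$ (k,k) = 1 \<Longrightarrow> A \<in> NC g"
proof (induction "\<Sum>i\<in>{0..<k}. nat \<bar>A $$ (i,k)\<bar>" arbitrary: A rule: less_induct)
  case (less A)
  have Ac: "A \<in> carrier_mat g g" using Gamma2_carrier less.prems by blast
  show ?case
  proof (cases "\<exists>i<k. A $$ (i,k) \<noteq> 0")
    case False
    have "idcols (Suc k) A" unfolding idcols_def
    proof (intro allI impI)
      fix i c assume i: "i < g" and c: "c < Suc k"
      show "A $$ (i,c) = (if i = c then 1 else 0)"
      proof (cases "c < k")
        case True then show ?thesis using less.prems(2) i unfolding idcols_def by blast
      next
        case False
        then have "c = k" using c by simp
        then show ?thesis using less.prems(3,4) \<open>\<not> (\<exists>i<k. A $$ (i,k) \<noteq> 0)\<close> i unfolding below_def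
          by (cases "i < k"; cases "i = k") auto
      qed
    qed
    then show ?thesis using H less.prems by blast
  next
    case True
    then obtain i where i: "i < k" "A $$ (i,k) \<noteq> 0" by auto
    have ig: "i < g" using i k by simp
    define a where "a = (if A $$ (i,k) > 0 then -1 else 1 :: int)"
    let ?M = "addrow_mat g (2*a) i k"
    let ?A' = "addrow (2*a) i k A"
    have MN: "?M \<in> NC g" using addrow_NC[of i g k] i k by simp
    have MA: "?M * A = ?A'" using addrow_mat[OF Ac k] by simp
    have A'G: "?A' \<in> Gamma2 g" using NC_Gamma2[OF MN less.prems(1)] MA by simp
    have ent: "\<And>r c. r < g \<Longrightarrow> c < g \<Longrightarrow> ?A' $$ (r,c) = (if i = r then 2*a*A $$ (k,c) + A $$ (r,c) else A $$ (r,c))"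
      using Ac by auto
    have Akc: "A $$ (k,c) = 0" if "c < k" for c using less.prems(2) that k unfolding idcols_def by auto
    have ic': "idcols k ?A'" using less.prems(2) Akc ent k unfolding idcols_def by auto
    have bl': "below k ?A'" using less.prems(3) ent i unfolding below_def by auto
    have kk': "?A' $$ (k,k) = 1" using less.prems(4) ent i k by auto
    have ev: "A $$ (i,k) mod 2 = 0" using Gamma2_mod[OF less.prems(1) ig k] i by simp
    have "(\<Sum>r\<in>{0..<k}. nat \<bar>?A' $$ (r,k)\<bar>) < (\<Sum>r\<in>{0..<k}. nat \<bar>A $$ (r,k)\<bar>)"
    proof (rule sum_decr[where p = i])
      show "nat \<bar>?A' $$ (i,k)\<bar> < nat \<bar>A $$ (i,k)\<bar>"
        using ent[OF ig k] arith1[OF ev i(2)] less.prems(4) by (simp add: a_def)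
      show "\<And>x. x \<in> {0..<k} \<Longrightarrow> x \<noteq> i \<Longrightarrow> nat \<bar>?A' $$ (x,k)\<bar> = nat \<bar>A $$ (x,k)\<bar>"
        using ent k by auto
    qed (use i in auto)
    then have "?A' \<in> NC g" using less.hyps A'G ic' bl' kk' by blast
    then show ?thesis using NC_cancel[OF MN Gamma2_GLZ[OF less.prems(1)]] MA by simp
  qed
qed

lemma L2:
  assumes H: "\<And>B. B \<in> Gamma2 g \<Longrightarrow> idcols (Suc k) B \<Longrightarrow> B \<in> NC g" and k: "k < g"
  shows "A \<in> Gamma2 g \<Longrightarrow> idcols k A \<Longrightarrow> A \<in> NC g"
proof (induction "\<Sum>i\<in>{k..<g}. nat \<bar>A $$ (i,k)\<bar>" arbitrary: A rule: less_induct)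
  case (less A)
  have Ac: "A \<in> carrier_mat g g" using Gamma2_carrier less.prems by blast
  have AG: "A \<in> GLZ g" using Gamma2_GLZ less.prems by blast
  show ?case
  proof (cases "below k A")
    case True
    have u: "A $$ (k,k) = 1 \<or> A $$ (k,k) = -1" using unit_pivot[OF AG k less.prems(2) True] .
    show ?thesis
    proof (cases "A $$ (k,k) = 1")
      case True
      then show ?thesis using L1[OF H k] less.prems \<open>below k A\<close> by blast
    next
      case False
      then have m1: "A $$ (k,k) = -1" using u by simp
      let ?M = "multrow_mat g k (-1) :: int mat"
      let ?A' = "multrow k (-1) A"
      have MN: "?M \<in> NC g" using multrow_NC k by simp
      have MA: "?M * A = ?A'" using multrow_mat[OF Ac] by simp
      have A'G: "?A' \<in> Gamma2 g" using NC_Gamma2[OF MN less.prems(1)] MA by simp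
      have ent: "\<And>r c. r < g \<Longrightarrow> c < g \<Longrightarrow> ?A' $$ (r,c) = (if k = r then - A $$ (r,c) else A $$ (r,c))"
        using Ac by auto
      have Akc: "A $$ (k,c) = 0" if "c < k" for c using less.prems(2) that k unfolding idcols_def by auto
      have ic': "idcols k ?A'" using less.prems(2) Akc ent k unfolding idcols_def by auto
      have bl': "below k ?A'" using \<open>below k A\<close> ent unfolding below_def by auto
      have kk': "?A' $$ (k,k) = 1" using m1 ent k by auto
      have "?A' \<in> NC g" using L1[OF H k A'G ic' bl' kk'] .
      then show ?thesis using NC_cancel[OF MN AG] MA by simp
    qed
  next
    case False
    then obtain i where i: "k < i" "i < g" "A $$ (i,k) \<noteq> 0" unfolding below_def by auto
    have ik: "i \<noteq> k" using i by simp
    have odd: "A $$ (k,k) mod 2 = 1" using Gamma2_mod[OF less.prems(1) k k] by simp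
    have ev: "A $$ (i,k) mod 2 = 0" using Gamma2_mod[OF less.prems(1) i(2) k] ik by simp
    have x0: "A $$ (k,k) \<noteq> 0" using odd by auto
    have neq: "\<bar>A $$ (k,k)\<bar> \<noteq> \<bar>A $$ (i,k)\<bar>"
    proof
      assume "\<bar>A $$ (k,k)\<bar> = \<bar>A $$ (i,k)\<bar>"
      then have "A $$ (k,k) = A $$ (i,k) \<or> A $$ (k,k) = - A $$ (i,k)" by (auto simp: abs_if split: if_splits)
      then show False using odd ev by (auto simp: zmod_zminus1_eq_if)
    qed
    have Aic: "A $$ (i,c) = 0" if "c < k" for c using less.prems(2) that i unfolding idcols_def by auto
    have Akc: "A $$ (k,c) = 0" if "c < k" for c using less.prems(2) that k unfolding idcols_def by auto
    show ?thesis
    proof (cases "\<bar>A $$ (i,k)\<bar> < \<bar>A $$ (k,k)\<bar>")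
      case True
      define a where "a = (if (A $$ (k,k) > 0) = (A $$ (i,k) > 0) then -1 else 1 :: int)"
      let ?M = "addrow_mat g (2*a) k i"
      let ?A' = "addrow (2*a) k i A"
      have MN: "?M \<in> NC g" using addrow_NC[of k g i] i k by simp
      have MA: "?M * A = ?A'" using addrow_mat[OF Ac i(2)] by simp
      have A'G: "?A' \<in> Gamma2 g" using NC_Gamma2[OF MN less.prems(1)] MA by simp
      have ent: "\<And>r c. r < g \<Longrightarrow> c < g \<Longrightarrow> ?A' $$ (r,c) = (if k = r then 2*a*A $$ (i,c) + A $$ (r,c) else A $$ (r,c))"
        using Ac by auto
      have ic': "idcols k ?A'" using less.prems(2) Aic ent k unfolding idcols_def by auto
      have "(\<Sum>r\<in>{k..<g}. nat \<bar>?A' $$ (r,k)\<bar>) < (\<Sum>r\<in>{k..<g}. nat \<bar>A $$ (r,k)\<bar>)"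
      proof (rule sum_decr[where p = k])
        show "nat \<bar>?A' $$ (k,k)\<bar> < nat \<bar>A $$ (k,k)\<bar>"
          using ent[OF k k] arith2[of "A $$ (i,k)" "A $$ (k,k)"] True i(3) by (simp add: a_def)
        show "\<And>x. x \<in> {k..<g} \<Longrightarrow> x \<noteq> k \<Longrightarrow> nat \<bar>?A' $$ (x,k)\<bar> = nat \<bar>A $$ (x,k)\<bar>"
          using ent k by auto
      qed (use k in auto)
      then have "?A' \<in> NC g" using less.hyps A'G ic' by blast
      then show ?thesis using NC_cancel[OF MN AG] MA by simp
    next
      case False
      then have lt: "\<bar>A $$ (k,k)\<bar> < \<bar>A $$ (i,k)\<bar>" using neq by simp
      define a where "a = (if (A $$ (i,k) > 0) = (A $$ (k,k) > 0) then -1 else 1 :: int)"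
      let ?M = "addrow_mat g (2*a) i k"
      let ?A' = "addrow (2*a) i k A"
      have MN: "?M \<in> NC g" using addrow_NC[of i g k] i k by simp
      have MA: "?M * A = ?A'" using addrow_mat[OF Ac k] by simp
      have A'G: "?A' \<in> Gamma2 g" using NC_Gamma2[OF MN less.prems(1)] MA by simp
      have ent: "\<And>r c. r < g \<Longrightarrow> c < g \<Longrightarrow> ?A' $$ (r,c) = (if i = r then 2*a*A $$ (k,c) + A $$ (r,c) else A $$ (r,c))"
        using Ac by auto
      have ic': "idcols k ?A'" using less.prems(2) Akc ent i unfolding idcols_def by auto
      have "(\<Sum>r\<in>{k..<g}. nat \<bar>?A' $$ (r,k)\<bar>) < (\<Sum>r\<in>{k..<g}. nat \<bar>A $$ (r,k)\<bar>)"
      proof (rule sum_decr[where p = i])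
        show "nat \<bar>?A' $$ (i,k)\<bar> < nat \<bar>A $$ (i,k)\<bar>"
          using ent[OF i(2) k] arith2[of "A $$ (k,k)" "A $$ (i,k)"] lt x0 by (simp add: a_def)
        show "\<And>x. x \<in> {k..<g} \<Longrightarrow> x \<noteq> i \<Longrightarrow> nat \<bar>?A' $$ (x,k)\<bar> = nat \<bar>A $$ (x,k)\<bar>"
          using ent k by auto
      qed (use i in auto)
      then have "?A' \<in> NC g" using less.hyps A'G ic' by blast
      then show ?thesis using NC_cancel[OF MN AG] MA by simp
    qed
  qed
qed

lemma all_NC: "k \<le> g \<Longrightarrow> A \<in> Gamma2 g \<Longrightarrow> idcols k A \<Longrightarrow> A \<in> NC g"
proof (induction "g - k" arbitrary: k A)
  case 0
  then have kg: "k = g" by simp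
  have Ac: "A \<in> carrier_mat g g" using Gamma2_carrier 0 by blast
  have "A = 1\<^sub>m g" using 0 kg Ac unfolding idcols_def by (intro eq_matI) auto
  moreover have "1\<^sub>m g \<in> NC g" using subgroup.one_closed[OF NC_subgroup[of g]] one_G[of g] by simp
  ultimately show ?case by simp
next
  case (Suc m)
  then have k: "k < g" by simp
  have H: "\<And>B. B \<in> Gamma2 g \<Longrightarrow> idcols (Suc k) B \<Longrightarrow> B \<in> NC g"
    using Suc.hyps(1)[of "Suc k"] Suc.hyps(2) k by simp
  show ?case using L2[OF H k Suc.prems(2,3)] .
qed

end

lemma main_thm: "Gamma2 g = normal_closure (GLZ_group g) {F1 g}"
proof
  show "Gamma2 g \<subseteq> normal_closure (GLZ_group g) {F1 g}"
    using all_NC[of 0 g] by (auto simp: idcols_def)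
  show "normal_closure (GLZ_group g) {F1 g} \<subseteq> Gamma2 g" by (rule closure_sub_Gamma2)
qed


theorem lemma3p4:
  fixes g :: nat
  assumes "g \<ge> 1"
  shows "Gamma2 g = normal_closure (GLZ_group g) {F1 g}"
  by (rule main_thm)

end
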